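(* In the setting described in the context, for $m\in\mathcal{M}$ and $s\in\mathcal{S}$ define $V$ by the Bellman equation $$V(m,s)=\min_{g^r\in\{1,\dots,k\},\,g^d\in\{1,\dots,k\}}\Big(\ell(m,s,g^r,g^d)+\beta\sum_{\hat m\in\mathcal{M}}\mathbb{P}(\hat m\mid m,g^r,g^d)\,V(\hat m,f(s))\Big),$$ and let $(\mathfrak{g}^{r,*}(m,s),\mathfrak{g}^{d,*}(m,s))$ be a minimizer of the right-hand side. Then the control law $$u^{i,*}_t=\mathbb{1}(x^i_t=0)\,\mathfrak{g}^{r,*}(m_t,s_t)+\mathbb{1}(x^i_t=1)\,\mathfrak{g}^{d,*}(m_t,s_t),\quad i\in\{1,\dots,n\},\ t\in\mathbb{N},$$ is optimal, i.e. the corresponding strategy $g^*$ satisfies $J(g^* )\le J(g)$ for every admissible strategy $g$.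
   Context: Setting: $n\in\mathbb{N}$ users, demand probability $p\in(0,1)$, $k$ options $\{1,\dots,k\}$. Each option $u$ has participation rate $\alpha(u)\in[0,1]$, delivery rate $q(u,m)\in(0,1]$, reserve price $c_r(u,1-m)\ge0$ and demand price $c_d(u,m)\ge0$, for $m\in\mathcal{M}:=\{0,\frac1n,\dots,1\}$. User $i$ has state $x^i_t\in\{0,1\}$ (1 = has a demand); mean-field $m_t=\frac1n\sum_i\mathbb{1}(x^i_t=1)$. Given option $u^i_t$ and $m_t$: $\mathbb{P}(x^i_{t+1}=1\mid x^i_t=0,u^i_t,m_t)=(1-\alpha(u^i_t))p$, $\mathbb{P}(x^i_{t+1}=0\mid x^i_t=1,u^i_t,m_t)=q(u^i_t,m_t)$ (complementary probabilities otherwise), users' transitions conditionally independent given current joint states and actions. Per-user cost $c(x,u,m)=\mathbb{1}(x=0)c_r(u,1-m)+\mathbb{1}(x=1)c_d(u,m)$. Desired load trajectory: set $\mathcal{S}$, maps $f:\mathcal{S}\to\mathcal{S}$, $h:\mathcal{S}\to[0,1]$, known initial $s_1$, $s_{t+1}=f(s_t)$, $\theta_t=h(s_t)$. $D:\mathcal{M}\times[0,1]\to\mathbb{R}_{\ge0}$ is a distance function, $\beta\in(0,1)$ a discount factor. Admissible strategies $g=(g_1,g_2,\dots)$ have $u^i_t=g_t(x^i_t,m_{1:t})$ with $g_t:\{0,1\}\times\mathcal{M}^t\to\{1,\dots,k\}$, common to all users. The cost is $J(g)=\mathbb{E}^g\big[\sum_{t=1}^\infty\beta^{t-1}\frac1n\big(\sum_{i=1}^n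 c(x^i_t,u^i_t,m_t)+D(m_t,\theta_t)\big)\big]$. Define $\ell(m,s,g^r,g^d):=(1-m)c_r(g^r,1-m)+m\,c_d(g^d,m)+D(m,h(s))$. The transition kernel $\mathbb{P}(\hat m\mid m,g^r,g^d)$ is the probability that $m_{t+1}=\hat m$ given $m_t=m$ when users with state $0$ use option $g^r$ and users with state $1$ use option $g^d$; explicitly it is the distribution of $\frac1n(Y_0+Y_1)$ with $Y_0\sim\mathrm{Binomial}(n(1-m),(1-\alpha(g^r))p)$ and $Y_1\sim\mathrm{Binomial}(nm,1-q(g^d,m))$ independent. *)

theory Defs
  imports "HOL-Probability.Probability"
begin

text \<open>Users are indexed by i < n; a joint state is a function
  nat => bool (True = the user has a demand, i.e. state 1).
  Time is 1-based: strategy component g t is used at time t (t >= 1) and receives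
  the history [m_1, ..., m_t] as a list.\<close>

definition Mset :: "nat \<Rightarrow> real set" where
  "Mset n = (\<lambda>j. real j / real n) ` {..n}"

definition mf :: "nat \<Rightarrow> (nat \<Rightarrow> bool) \<Rightarrow> real" where
  "mf n x = real (card {i. i < n \<and> x i}) / real n"

definition step_pmf ::
  "nat \<Rightarrow> real \<Rightarrow> (nat \<Rightarrow> real) \<Rightarrow> (nat \<Rightarrow> real \<Rightarrow> real)
   \<Rightarrow> (nat \<Rightarrow> bool) \<Rightarrow> (nat \<Rightarrow> nat) \<Rightarrow> real \<Rightarrow> (nat \<Rightarrow> bool) pmf" where
  "step_pmf n p alpha q x u m =
     Pi_pmf {..<n} False
       (\<lambda>i. if x i then bernoulli_pmf (1 - q (u i) m)
            else bernoulli_pmf ((1 - alpha (u i)) * p))"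

text \<open>Distribution of (x_t, [m_1,...,m_t]) at time Suc t under strategy g,
  with initial joint-state distribution x0.\<close>
primrec proc ::
  "nat \<Rightarrow> real \<Rightarrow> (nat \<Rightarrow> real) \<Rightarrow> (nat \<Rightarrow> real \<Rightarrow> real)
   \<Rightarrow> (nat \<Rightarrow> bool \<Rightarrow> real list \<Rightarrow> nat) \<Rightarrow> (nat \<Rightarrow> bool) pmf
   \<Rightarrow> nat \<Rightarrow> ((nat \<Rightarrow> bool) \<times> real list) pmf" where
  "proc n p alpha q g x0 0 = map_pmf (\<lambda>x. (x, [mf n x])) x0"
| "proc n p alpha q g x0 (Suc t) =
     bind_pmf (proc n p alpha q g x0 t)
       (\<lambda>(x, hist). map_pmf (\<lambda>x'. (x', hist @ [mf n x']))
          (step_pmf n p alpha q x (\<lambda>i. g (Suc t) (x i) hist) (mf n x)))"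

definition ucost ::
  "(nat \<Rightarrow> real \<Rightarrow> real) \<Rightarrow> (nat \<Rightarrow> real \<Rightarrow> real) \<Rightarrow> bool \<Rightarrow> nat \<Rightarrow> real \<Rightarrow> real" where
  "ucost cr cd x u m = (if x then cd u m else cr u (1 - m))"

definition Jcost ::
  "nat \<Rightarrow> real \<Rightarrow> (nat \<Rightarrow> real) \<Rightarrow> (nat \<Rightarrow> real \<Rightarrow> real)
   \<Rightarrow> (nat \<Rightarrow> real \<Rightarrow> real) \<Rightarrow> (nat \<Rightarrow> real \<Rightarrow> real) \<Rightarrow> (real \<Rightarrow> real \<Rightarrow> real)
   \<Rightarrow> ('s \<Rightarrow> 's) \<Rightarrow> ('s \<Rightarrow> real) \<Rightarrow> 's \<Rightarrow> real
   \<Rightarrow> (nat \<Rightarrow> bool) pmf \<Rightarrow> (nat \<Rightarrow> bool \<Rightarrow> real list \<Rightarrow> nat) \<Rightarrow> real" where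
  "Jcost n p alpha q cr cd D f h s1 beta x0 g =
     (\<Sum>t. beta ^ t *
        measure_pmf.expectation (proc n p alpha q g x0 t)
          (\<lambda>(x, hist).
             (1 / real n) * (\<Sum>i<n. ucost cr cd (x i) (g (Suc t) (x i) hist) (mf n x))
             + D (mf n x) (h ((f ^^ t) s1))))"

definition ell ::
  "(nat \<Rightarrow> real \<Rightarrow> real) \<Rightarrow> (nat \<Rightarrow> real \<Rightarrow> real) \<Rightarrow> (real \<Rightarrow> real \<Rightarrow> real)
   \<Rightarrow> ('s \<Rightarrow> real) \<Rightarrow> real \<Rightarrow> 's \<Rightarrow> nat \<Rightarrow> nat \<Rightarrow> real" where
  "ell cr cd D h m s gr gd = (1 - m) * cr gr (1 - m) + m * cd gd m + D m (h s)"

definition Pkern ::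
  "nat \<Rightarrow> real \<Rightarrow> (nat \<Rightarrow> real) \<Rightarrow> (nat \<Rightarrow> real \<Rightarrow> real)
   \<Rightarrow> real \<Rightarrow> nat \<Rightarrow> nat \<Rightarrow> real pmf" where
  "Pkern n p alpha q m gr gd =
     map_pmf (\<lambda>(a, b). real (a + b) / real n)
       (pair_pmf (binomial_pmf (n - nat (round (real n * m))) ((1 - alpha gr) * p))
                 (binomial_pmf (nat (round (real n * m))) (1 - q gd m)))"

definition Qval ::
  "nat \<Rightarrow> real \<Rightarrow> (nat \<Rightarrow> real) \<Rightarrow> (nat \<Rightarrow> real \<Rightarrow> real)
   \<Rightarrow> (nat \<Rightarrow> real \<Rightarrow> real) \<Rightarrow> (nat \<Rightarrow> real \<Rightarrow> real) \<Rightarrow> (real \<Rightarrow> real \<Rightarrow> real)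
   \<Rightarrow> ('s \<Rightarrow> 's) \<Rightarrow> ('s \<Rightarrow> real) \<Rightarrow> real \<Rightarrow> (real \<Rightarrow> 's \<Rightarrow> real)
   \<Rightarrow> real \<Rightarrow> 's \<Rightarrow> nat \<Rightarrow> nat \<Rightarrow> real" where
  "Qval n p alpha q cr cd D f h beta V m s gr gd =
     ell cr cd D h m s gr gd
     + beta * (\<Sum>m'\<in>Mset n. pmf (Pkern n p alpha q m gr gd) m' * V m' (f s))"

end

theory Submission
  imports Defs
begin

lemma mf_Mset: assumes "n > 0" shows "mf n x \<in> Mset n"
proof -
  have "card {i. i < n \<and> x i} \<le> n"
    by (metis (no_types, lifting) card_lessThan card_mono finite_lessThan lessThan_iff mem_Collect_eq subsetI)
  thus ?thesis unfolding mf_def Mset_def by auto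
qed

lemma finite_Mset: "finite (Mset n)" unfolding Mset_def by auto

lemma Mset_range: "m \<in> Mset n \<Longrightarrow> 0 \<le> m \<and> m \<le> 1"
  unfolding Mset_def by (auto simp: divide_le_eq_1)

lemma mf_step:
  assumes n: "n > 0" and u: "\<And>i. i < n \<Longrightarrow> u i = (if x i then gd else gr)"
    and a: "0 \<le> (1 - alpha gr) * p" "(1 - alpha gr) * p \<le> 1"
    and b: "0 \<le> 1 - q gd (mf n x)" "1 - q gd (mf n x) \<le> 1"
  shows "map_pmf (mf n) (step_pmf n p alpha q x u (mf n x)) = Pkern n p alpha q (mf n x) gr gd"
proof -
  define A where "A = {i. i < n \<and> \<not> x i}"
  define B where "B = {i. i < n \<and> x i}"
  define P where "P = (\<lambda>i. if x i then bernoulli_pmf (1 - q gd (mf n x)) else bernoulli_pmf ((1 - alpha gr) * p))"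
  have fin: "finite A" "finite B" unfolding A_def B_def by auto
  have dis: "A \<inter> B = {}" unfolding A_def B_def by auto
  have un: "{..<n} = A \<union> B" unfolding A_def B_def by auto
  have "step_pmf n p alpha q x u (mf n x) = Pi_pmf (A \<union> B) False P"
    unfolding step_pmf_def un[symmetric] P_def by (rule Pi_pmf_cong) (auto simp: u)
  also have "\<dots> = map_pmf (\<lambda>(f,g) i. if i \<in> A then f i else g i) (pair_pmf (Pi_pmf A False P) (Pi_pmf B False P))"
    by (rule Pi_pmf_union[OF fin dis])
  also have "Pi_pmf A False P = Pi_pmf A False (\<lambda>_. bernoulli_pmf ((1 - alpha gr) * p))"
    by (rule Pi_pmf_cong) (auto simp: P_def A_def)
  also have "Pi_pmf B False P = Pi_pmf B False (\<lambda>_. bernoulli_pmf (1 - q gd (mf n x)))"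
    by (rule Pi_pmf_cong) (auto simp: P_def B_def)
  finally have st: "step_pmf n p alpha q x u (mf n x) = map_pmf (\<lambda>(f,g) i. if i \<in> A then f i else g i)
     (pair_pmf (Pi_pmf A False (\<lambda>_. bernoulli_pmf ((1 - alpha gr) * p))) (Pi_pmf B False (\<lambda>_. bernoulli_pmf (1 - q gd (mf n x)))))" .
  have cardeq: "\<And>f g. mf n (\<lambda>i. if i \<in> A then f i else g i) =
     (\<lambda>(a, b). real (a + b) / real n) (card {i\<in>A. f i}, card {i\<in>B. g i})"
  proof -
    fix f g :: "nat \<Rightarrow> bool"
    have "{i. i < n \<and> (if i \<in> A then f i else g i)} = {i\<in>A. f i} \<union> {i\<in>B. g i}"
      unfolding A_def B_def by auto
    moreover have "card ({i\<in>A. f i} \<union> {i\<in>B. g i}) = card {i\<in>A. f i} + card {i\<in>B. g i}"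
      by (rule card_Un_disjoint) (use fin dis in auto)
    ultimately show "mf n (\<lambda>i. if i \<in> A then f i else g i) =
     (\<lambda>(a, b). real (a + b) / real n) (card {i\<in>A. f i}, card {i\<in>B. g i})"
      unfolding mf_def by simp
  qed
  have cB: "nat (round (real n * mf n x)) = card B"
    using n unfolding mf_def B_def by simp
  have cA: "n - card B = card A"
  proof -
    have "card A = card ({..<n} - B)" unfolding A_def B_def by (intro arg_cong[where f=card]) auto
    also have "\<dots> = n - card B" by (subst card_Diff_subset) (auto simp: B_def)
    finally show ?thesis by simp
  qed
  have "map_pmf (mf n) (step_pmf n p alpha q x u (mf n x)) =
     map_pmf (\<lambda>(a, b). real (a + b) / real n) (map_pmf (\<lambda>(f,g). (card {i\<in>A. f i}, card {i\<in>B. g i}))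
     (pair_pmf (Pi_pmf A False (\<lambda>_. bernoulli_pmf ((1 - alpha gr) * p))) (Pi_pmf B False (\<lambda>_. bernoulli_pmf (1 - q gd (mf n x))))))"
    unfolding st map_pmf_comp by (intro pmf.map_cong refl) (simp only: split_beta comp_def cardeq)
  also have "\<dots> = map_pmf (\<lambda>(a, b). real (a + b) / real n) (pair_pmf (binomial_pmf (card A) ((1 - alpha gr) * p))
       (binomial_pmf (card B) (1 - q gd (mf n x))))"
    unfolding map_pair
    by (subst binomial_pmf_altdef'[OF fin(1) refl, of _ False], use a in simp,
        subst binomial_pmf_altdef'[OF fin(2) refl, of _ False], use b in simp_all)
  also have "\<dots> = Pkern n p alpha q (mf n x) gr gd"
    unfolding Pkern_def cB cA ..
  finally show ?thesis .
qed

lemma expectation_bind_pmf: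
  fixes f :: "'b \<Rightarrow> real"
  assumes "\<And>y. \<bar>f y\<bar> \<le> B"
  shows "measure_pmf.expectation (bind_pmf M N) f = measure_pmf.expectation M (\<lambda>x. measure_pmf.expectation (N x) f)"
  unfolding measure_pmf_bind
  by (rule integral_bind[where K="count_space UNIV" and B=B and B'=1])
     (use assms in \<open>auto simp: measure_pmf.finite_measure_axioms measure_pmf.emeasure_space_1 measure_subprob\<close>)

lemma integrable_pmf_bounded:
  fixes f :: "'b \<Rightarrow> real"
  assumes "\<And>y. y \<in> set_pmf M \<Longrightarrow> \<bar>f y\<bar> \<le> B"
  shows "integrable (measure_pmf M) f"
  by (rule measure_pmf.integrable_const_bound[where B=B]) (use assms in \<open>auto simp: AE_measure_pmf_iff\<close>)


lemma expectation_bound: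
  fixes f :: "'b \<Rightarrow> real"
  assumes "\<And>y. y \<in> set_pmf M \<Longrightarrow> \<bar>f y\<bar> \<le> B"
  shows "\<bar>measure_pmf.expectation M f\<bar> \<le> B"
proof -
  have i: "integrable (measure_pmf M) f" by (rule integrable_pmf_bounded[OF assms])
  have "measure_pmf.expectation M f \<le> measure_pmf.expectation M (\<lambda>_. B)"
    by (rule integral_mono_AE[OF i]) (use assms in \<open>auto simp: AE_measure_pmf_iff abs_le_iff\<close>)
  moreover have "measure_pmf.expectation M (\<lambda>_. -B) \<le> measure_pmf.expectation M f"
    by (rule integral_mono_AE[OF _ i]) (use assms in \<open>force simp: AE_measure_pmf_iff abs_le_iff\<close>)+
  ultimately show ?thesis by simp
qed

lemma Mset_mf: assumes "m \<in> Mset n" "n > 0" shows "\<exists>x. m = mf n x"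
proof -
  obtain j where j: "j \<le> n" "m = real j / real n" using assms unfolding Mset_def by auto
  have "{i. i < n \<and> i < j} = {..<j}" using j by auto
  hence "mf n (\<lambda>i. i < j) = m" using j unfolding mf_def by simp
  thus ?thesis by metis
qed

lemma stage_sum:
  assumes "n > 0"
  shows "(1 / real n) * (\<Sum>i<n. ucost cr cd (x i) (a (x i)) (mf n x))
     = (1 - mf n x) * cr (a False) (1 - mf n x) + mf n x * cd (a True) (mf n x)"
proof -
  define c where "c = card {i. i < n \<and> x i}"
  have "(\<Sum>i<n. ucost cr cd (x i) (a (x i)) (mf n x)) =
        (\<Sum>i<n. if x i then cd (a True) (mf n x) else cr (a False) (1 - mf n x))"
    by (rule sum.cong) (auto simp: ucost_def)
  also have "\<dots> = real (card ({..<n} \<inter> {i. x i})) * cd (a True) (mf n x)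
      + real (card ({..<n} \<inter> - {i. x i})) * cr (a False) (1 - mf n x)"
    by (simp add: sum.If_cases)
  also have "card ({..<n} \<inter> {i. x i}) = c" unfolding c_def by (intro arg_cong[where f=card]) auto
  also have "card ({..<n} \<inter> - {i. x i}) = n - c"
  proof -
    have "{..<n} \<inter> - {i. x i} = {..<n} - {i. i < n \<and> x i}" by auto
    thus ?thesis unfolding c_def by (simp, subst card_Diff_subset, auto)
  qed
  finally have e: "(\<Sum>i<n. ucost cr cd (x i) (a (x i)) (mf n x)) =
     real c * cd (a True) (mf n x) + real (n - c) * cr (a False) (1 - mf n x)" .
  have cn: "c \<le> n" unfolding c_def
    by (metis (no_types, lifting) card_lessThan card_mono finite_lessThan lessThan_iff mem_Collect_eq subsetI)
  have m: "mf n x = real c / real n" unfolding mf_def c_def ..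
  have "(1 / real n) * (\<Sum>i<n. ucost cr cd (x i) (a (x i)) (mf n x)) =
     (1 / real n) * (real c * cd (a True) (mf n x) + real (n - c) * cr (a False) (1 - mf n x))"
    by (simp only: e)
  also have "\<dots> = (1 - mf n x) * cr (a False) (1 - mf n x) + mf n x * cd (a True) (mf n x)"
    using assms cn by (simp add: m field_simps of_nat_diff)
  finally show ?thesis .
qed


locale ctx =
  fixes n k :: nat and p beta :: real
    and alpha :: "nat \<Rightarrow> real" and q cr cd :: "nat \<Rightarrow> real \<Rightarrow> real"
    and D :: "real \<Rightarrow> real \<Rightarrow> real"
    and f :: "'s \<Rightarrow> 's" and h :: "'s \<Rightarrow> real" and s1 :: 's
    and V :: "real \<Rightarrow> 's \<Rightarrow> real" and grs gds :: "real \<Rightarrow> 's \<Rightarrow> nat"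
    and x0 :: "(nat \<Rightarrow> bool) pmf" and BV :: real
  assumes n_pos: "n > 0"
    and p: "0 < p" "p < 1"
    and beta: "0 < beta" "beta < 1"
    and alpha: "\<And>u. u \<in> {1..k} \<Longrightarrow> 0 \<le> alpha u \<and> alpha u \<le> 1"
    and q: "\<And>u m. u \<in> {1..k} \<Longrightarrow> m \<in> Mset n \<Longrightarrow> 0 < q u m \<and> q u m \<le> 1"
    and cr: "\<And>u m. u \<in> {1..k} \<Longrightarrow> m \<in> Mset n \<Longrightarrow> cr u (1 - m) \<ge> 0"
    and cd: "\<And>u m. u \<in> {1..k} \<Longrightarrow> m \<in> Mset n \<Longrightarrow> cd u m \<ge> 0"
    and h: "\<And>s. 0 \<le> h s \<and> h s \<le> 1"
    and D: "\<And>m th. m \<in> Mset n \<Longrightarrow> 0 \<le> th \<Longrightarrow> th \<le> 1 \<Longrightarrow> D m th \<ge> 0"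
    and VB: "\<And>m s. m \<in> Mset n \<Longrightarrow> \<bar>V m s\<bar> \<le> BV"
    and bellman: "\<And>m s. m \<in> Mset n \<Longrightarrow>
       V m s = Min {Qval n p alpha q cr cd D f h beta V m s gr gd | gr gd. gr \<in> {1..k} \<and> gd \<in> {1..k}}"
    and minimizer: "\<And>m s. m \<in> Mset n \<Longrightarrow>
       grs m s \<in> {1..k} \<and> gds m s \<in> {1..k} \<and>
       (\<forall>gr\<in>{1..k}. \<forall>gd\<in>{1..k}.
          Qval n p alpha q cr cd D f h beta V m s (grs m s) (gds m s)
          \<le> Qval n p alpha q cr cd D f h beta V m s gr gd)"
begin

abbreviation "Q \<equiv> Qval n p alpha q cr cd D f h beta V"

definition sumPV :: "real \<Rightarrow> nat \<Rightarrow> nat \<Rightarrow> 's \<Rightarrow> real" where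
  "sumPV m gr gd s' = (\<Sum>m'\<in>Mset n. pmf (Pkern n p alpha q m gr gd) m' * V m' s')"

lemma Q_eq: "Q m s gr gd = ell cr cd D h m s gr gd + beta * sumPV m gr gd (f s)"
  unfolding Qval_def sumPV_def ..

lemma V_eq: assumes "m \<in> Mset n" shows "V m s = Q m s (grs m s) (gds m s)"
proof -
  have "Min {Q m s gr gd | gr gd. gr \<in> {1..k} \<and> gd \<in> {1..k}} = Q m s (grs m s) (gds m s)"
  proof (rule Min_eqI)
    show "finite {Q m s gr gd | gr gd. gr \<in> {1..k} \<and> gd \<in> {1..k}}"
      by (rule finite_image_set2) auto
  qed (use minimizer[OF assms, of s] in auto)
  thus ?thesis using bellman[OF assms, of s] by simp
qed

lemma V_le: assumes "m \<in> Mset n" "gr \<in> {1..k}" "gd \<in> {1..k}" shows "V m s \<le> Q m s gr gd"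
  using V_eq[OF assms(1), of s] minimizer[OF assms(1), of s] assms by auto

lemma Pkern_mf:
  assumes "gr \<in> {1..k}" "gd \<in> {1..k}" "\<And>i. i < n \<Longrightarrow> u i = (if x i then gd else gr)"
  shows "map_pmf (mf n) (step_pmf n p alpha q x u (mf n x)) = Pkern n p alpha q (mf n x) gr gd"
proof (rule mf_step[OF n_pos assms(3)])
  have "0 \<le> alpha gr" "alpha gr \<le> 1" using alpha[OF assms(1)] by auto
  thus "0 \<le> (1 - alpha gr) * p" "(1 - alpha gr) * p \<le> 1" using p
    by (auto intro: mult_nonneg_nonneg mult_le_one)
  have "0 < q gd (mf n x)" "q gd (mf n x) \<le> 1" using q[OF assms(2) mf_Mset[OF n_pos]] by auto
  thus "0 \<le> 1 - q gd (mf n x)" "1 - q gd (mf n x) \<le> 1" by auto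
qed

lemma Pkern_set:
  assumes "gr \<in> {1..k}" "gd \<in> {1..k}" "m \<in> Mset n"
  shows "set_pmf (Pkern n p alpha q m gr gd) \<subseteq> Mset n"
proof -
  obtain x where x: "m = mf n x" using Mset_mf[OF assms(3) n_pos] by auto
  have "Pkern n p alpha q m gr gd = map_pmf (mf n) (step_pmf n p alpha q x (\<lambda>i. if x i then gd else gr) (mf n x))"
    unfolding x by (rule Pkern_mf[OF assms(1,2), symmetric]) auto
  thus ?thesis using mf_Mset[OF n_pos] by auto
qed

lemma sumPV_integral:
  assumes "gr \<in> {1..k}" "gd \<in> {1..k}" "m \<in> Mset n"
  shows "sumPV m gr gd s' = measure_pmf.expectation (Pkern n p alpha q m gr gd) (\<lambda>m'. V m' s')"
  unfolding sumPV_def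
  by (subst integral_measure_pmf_real[OF finite_Mset]) (use Pkern_set[OF assms] in \<open>auto simp: mult.commute\<close>)

lemma sumPV_bound:
  assumes "gr \<in> {1..k}" "gd \<in> {1..k}" "m \<in> Mset n"
  shows "\<bar>sumPV m gr gd s'\<bar> \<le> BV"
  unfolding sumPV_integral[OF assms]
  by (rule expectation_bound) (use Pkern_set[OF assms] VB in auto)

lemma D_bound: assumes "m \<in> Mset n" shows "0 \<le> D m (h s) \<and> D m (h s) \<le> (1 + beta) * BV"
proof -
  have g: "grs m s \<in> {1..k}" "gds m s \<in> {1..k}" using minimizer[OF assms] by auto
  have m01: "0 \<le> m" "m \<le> 1" using Mset_range[OF assms] by auto
  have "0 \<le> (1 - m) * cr (grs m s) (1 - m)" using cr[OF g(1) assms] m01 by simp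
  moreover have "0 \<le> m * cd (gds m s) m" using cd[OF g(2) assms] m01 by simp
  moreover have "V m s = (1 - m) * cr (grs m s) (1 - m) + m * cd (gds m s) m + D m (h s) + beta * sumPV m (grs m s) (gds m s) (f s)"
    using V_eq[OF assms] Q_eq by (simp add: ell_def)
  moreover have "\<bar>sumPV m (grs m s) (gds m s) (f s)\<bar> \<le> BV" by (rule sumPV_bound[OF g assms])
  moreover have "\<bar>V m s\<bar> \<le> BV" by (rule VB[OF assms])
  moreover have "beta * (- sumPV m (grs m s) (gds m s) (f s)) \<le> beta * BV"
    using beta calculation(4) by (intro mult_left_mono) auto
  ultimately have "D m (h s) \<le> (1 + beta) * BV"
    by (simp add: algebra_simps abs_le_iff)
  thus ?thesis using D[OF assms] h by auto
qed

definition KC :: real where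
  "KC = (\<Sum>z\<in>{1..k} \<times> Mset n. \<bar>cr (fst z) (1 - snd z)\<bar> + \<bar>cd (fst z) (snd z)\<bar>)"

definition BL :: real where "BL = 2 * KC + (1 + beta) * BV"

lemma ell_bound:
  assumes "gr \<in> {1..k}" "gd \<in> {1..k}" "m \<in> Mset n"
  shows "\<bar>ell cr cd D h m s gr gd\<bar> \<le> BL"
proof -
  have m01: "0 \<le> m" "m \<le> 1" using Mset_range[OF assms(3)] by auto
  have fin: "finite ({1..k} \<times> Mset n)" using finite_Mset by auto
  have "\<bar>cr gr (1 - m)\<bar> + \<bar>cd gr m\<bar> \<le> KC" unfolding KC_def
    using member_le_sum[OF _ _ fin, of "(gr, m)" "\<lambda>z. \<bar>cr (fst z) (1 - snd z)\<bar> + \<bar>cd (fst z) (snd z)\<bar>"] assms by auto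
  hence c1: "\<bar>cr gr (1 - m)\<bar> \<le> KC" by auto
  have "\<bar>cr gd (1 - m)\<bar> + \<bar>cd gd m\<bar> \<le> KC" unfolding KC_def
    using member_le_sum[OF _ _ fin, of "(gd, m)" "\<lambda>z. \<bar>cr (fst z) (1 - snd z)\<bar> + \<bar>cd (fst z) (snd z)\<bar>"] assms by auto
  hence c2: "\<bar>cd gd m\<bar> \<le> KC" by auto
  have "\<bar>(1 - m) * cr gr (1 - m)\<bar> = (1 - m) * \<bar>cr gr (1 - m)\<bar>" using m01 by (simp add: abs_mult)
  also have "\<dots> \<le> \<bar>cr gr (1 - m)\<bar>" using m01 by (intro mult_left_le_one_le) auto
  finally have "\<bar>(1 - m) * cr gr (1 - m)\<bar> \<le> KC" using c1 by linarith
  moreover have "\<bar>m * cd gd m\<bar> = m * \<bar>cd gd m\<bar>" using m01 by (simp add: abs_mult)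
  moreover have "m * \<bar>cd gd m\<bar> \<le> \<bar>cd gd m\<bar>" using m01 by (intro mult_left_le_one_le) auto
  moreover have "\<bar>D m (h s)\<bar> \<le> (1 + beta) * BV" using D_bound[OF assms(3), of s] by auto
  ultimately show ?thesis unfolding ell_def BL_def
    using abs_triangle_ineq[of "(1 - m) * cr gr (1 - m) + m * cd gd m" "D m (h s)"]
      abs_triangle_ineq[of "(1 - m) * cr gr (1 - m)" "m * cd gd m"] c2 by linarith
qed


abbreviation "proc' G t \<equiv> proc n p alpha q G x0 t"

lemma last_hist: "z \<in> set_pmf (proc' G t) \<Longrightarrow> last (snd z) = mf n (fst z)"
  by (induction t arbitrary: z) auto

definition adm :: "(nat \<Rightarrow> bool \<Rightarrow> real list \<Rightarrow> nat) \<Rightarrow> bool" where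
  "adm G \<longleftrightarrow> (\<forall>t x hist. (x, hist) \<in> set_pmf (proc' G t) \<longrightarrow>
      G (Suc t) False hist \<in> {1..k} \<and> G (Suc t) True hist \<in> {1..k})"

definition stage :: "(nat \<Rightarrow> bool \<Rightarrow> real list \<Rightarrow> nat) \<Rightarrow> nat \<Rightarrow> (nat \<Rightarrow> bool) \<times> real list \<Rightarrow> real" where
  "stage G t = (\<lambda>(x, hist).
             (1 / real n) * (\<Sum>i<n. ucost cr cd (x i) (G (Suc t) (x i) hist) (mf n x))
             + D (mf n x) (h ((f ^^ t) s1)))"

definition Cv where "Cv G t = measure_pmf.expectation (proc' G t) (stage G t)"
definition Wv where "Wv G t = measure_pmf.expectation (proc' G t) (\<lambda>(x, hist). V (mf n x) ((f ^^ t) s1))"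
definition QG where "QG G t = (\<lambda>(x, hist). Q (mf n x) ((f ^^ t) s1) (G (Suc t) False hist) (G (Suc t) True hist))"

lemma Jcost_eq: "Jcost n p alpha q cr cd D f h s1 beta x0 G = (\<Sum>t. beta ^ t * Cv G t)"
  unfolding Jcost_def Cv_def stage_def ..

lemma stage_ell: "stage G t (x, hist) = ell cr cd D h (mf n x) ((f ^^ t) s1) (G (Suc t) False hist) (G (Suc t) True hist)"
  unfolding stage_def ell_def using stage_sum[OF n_pos, of cr cd x "\<lambda>b. G (Suc t) b hist"] by simp

lemma V_mf_bound: "\<bar>V (mf n x) s\<bar> \<le> BV" using VB[OF mf_Mset[OF n_pos]] .

lemma stage_bound: "adm G \<Longrightarrow> z \<in> set_pmf (proc' G t) \<Longrightarrow> \<bar>stage G t z\<bar> \<le> BL"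
  using ell_bound[OF _ _ mf_Mset[OF n_pos]] unfolding adm_def
  by (cases z) (auto simp: stage_ell)

lemma W_Suc:
  assumes "adm G"
  shows "Wv G (Suc t) = measure_pmf.expectation (proc' G t)
     (\<lambda>(x, hist). sumPV (mf n x) (G (Suc t) False hist) (G (Suc t) True hist) ((f ^^ Suc t) s1))"
proof -
  have "Wv G (Suc t) = measure_pmf.expectation (proc' G t) (\<lambda>z. measure_pmf.expectation
      ((\<lambda>(x, hist). map_pmf (\<lambda>x'. (x', hist @ [mf n x']))
          (step_pmf n p alpha q x (\<lambda>i. G (Suc t) (x i) hist) (mf n x))) z)
      (\<lambda>(x, hist). V (mf n x) ((f ^^ Suc t) s1)))"
    unfolding Wv_def proc.simps
    by (rule expectation_bind_pmf[where B=BV]) (auto simp: V_mf_bound)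
  also have "\<dots> = measure_pmf.expectation (proc' G t)
     (\<lambda>(x, hist). sumPV (mf n x) (G (Suc t) False hist) (G (Suc t) True hist) ((f ^^ Suc t) s1))"
  proof (intro integral_cong_AE)
    show "AE z in measure_pmf (proc' G t). measure_pmf.expectation
      ((\<lambda>(x, hist). map_pmf (\<lambda>x'. (x', hist @ [mf n x']))
          (step_pmf n p alpha q x (\<lambda>i. G (Suc t) (x i) hist) (mf n x))) z)
      (\<lambda>(x, hist). V (mf n x) ((f ^^ Suc t) s1)) =
      (\<lambda>(x, hist). sumPV (mf n x) (G (Suc t) False hist) (G (Suc t) True hist) ((f ^^ Suc t) s1)) z"
      unfolding AE_measure_pmf_iff
    proof (intro ballI)
      fix z assume z: "z \<in> set_pmf (proc' G t)"
      obtain x hist where zx: "z = (x, hist)" by (cases z)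
      have g: "G (Suc t) False hist \<in> {1..k}" "G (Suc t) True hist \<in> {1..k}"
        using assms z unfolding adm_def zx by auto
      have "measure_pmf.expectation (map_pmf (\<lambda>x'. (x', hist @ [mf n x']))
          (step_pmf n p alpha q x (\<lambda>i. G (Suc t) (x i) hist) (mf n x)))
          (\<lambda>(x, hist). V (mf n x) ((f ^^ Suc t) s1))
        = measure_pmf.expectation (map_pmf (mf n) (step_pmf n p alpha q x (\<lambda>i. G (Suc t) (x i) hist) (mf n x)))
          (\<lambda>m'. V m' ((f ^^ Suc t) s1))" by simp
      also have "map_pmf (mf n) (step_pmf n p alpha q x (\<lambda>i. G (Suc t) (x i) hist) (mf n x))
         = Pkern n p alpha q (mf n x) (G (Suc t) False hist) (G (Suc t) True hist)"
        by (rule Pkern_mf[OF g]) auto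
      finally show "measure_pmf.expectation
      ((\<lambda>(x, hist). map_pmf (\<lambda>x'. (x', hist @ [mf n x']))
          (step_pmf n p alpha q x (\<lambda>i. G (Suc t) (x i) hist) (mf n x))) z)
      (\<lambda>(x, hist). V (mf n x) ((f ^^ Suc t) s1)) =
      (\<lambda>(x, hist). sumPV (mf n x) (G (Suc t) False hist) (G (Suc t) True hist) ((f ^^ Suc t) s1)) z"
        unfolding zx using sumPV_integral[OF g mf_Mset[OF n_pos]] by simp
    qed
  qed auto
  finally show ?thesis .
qed

lemma CW_QG:
  assumes "adm G"
  shows "Cv G t + beta * Wv G (Suc t) = measure_pmf.expectation (proc' G t) (QG G t)"
proof -
  let ?P = "\<lambda>(x, hist). sumPV (mf n x) (G (Suc t) False hist) (G (Suc t) True hist) ((f ^^ Suc t) s1)"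
  have bP: "\<And>z. z \<in> set_pmf (proc' G t) \<Longrightarrow> \<bar>?P z\<bar> \<le> BV"
  proof -
    fix z assume z: "z \<in> set_pmf (proc' G t)"
    obtain x hist where zx: "z = (x, hist)" by (cases z)
    have g: "G (Suc t) False hist \<in> {1..k}" "G (Suc t) True hist \<in> {1..k}"
      using assms z unfolding adm_def zx by auto
    show "\<bar>?P z\<bar> \<le> BV" unfolding zx using sumPV_bound[OF g mf_Mset[OF n_pos]] by simp
  qed
  have i1: "integrable (measure_pmf (proc' G t)) (stage G t)"
    by (rule integrable_pmf_bounded) (rule stage_bound[OF assms])
  have i2: "integrable (measure_pmf (proc' G t)) ?P"
    by (rule integrable_pmf_bounded) (rule bP)
  have "Cv G t + beta * Wv G (Suc t) = measure_pmf.expectation (proc' G t) (\<lambda>z. stage G t z + beta * ?P z)"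
    unfolding Cv_def W_Suc[OF assms] using i1 i2 by simp
  also have "\<dots> = measure_pmf.expectation (proc' G t) (QG G t)"
    by (rule Bochner_Integration.integral_cong) (auto simp: QG_def Q_eq stage_ell split: prod.splits)
  finally show ?thesis .
qed

lemma QG_bound: "adm G \<Longrightarrow> z \<in> set_pmf (proc' G t) \<Longrightarrow> \<bar>QG G t z\<bar> \<le> BL + beta * BV"
proof -
  assume a: "adm G" "z \<in> set_pmf (proc' G t)"
  obtain x hist where zx: "z = (x, hist)" by (cases z)
  have g: "G (Suc t) False hist \<in> {1..k}" "G (Suc t) True hist \<in> {1..k}"
    using a unfolding adm_def zx by auto
  have e: "\<bar>ell cr cd D h (mf n x) ((f ^^ t) s1) (G (Suc t) False hist) (G (Suc t) True hist)\<bar> \<le> BL"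
    by (rule ell_bound[OF g mf_Mset[OF n_pos]])
  have s: "\<bar>sumPV (mf n x) (G (Suc t) False hist) (G (Suc t) True hist) (f ((f ^^ t) s1))\<bar> \<le> BV"
    by (rule sumPV_bound[OF g mf_Mset[OF n_pos]])
  have "\<bar>beta * sumPV (mf n x) (G (Suc t) False hist) (G (Suc t) True hist) (f ((f ^^ t) s1))\<bar> \<le> beta * BV"
    using s beta by (simp add: abs_mult mult_left_mono)
  moreover have "QG G t z = ell cr cd D h (mf n x) ((f ^^ t) s1) (G (Suc t) False hist) (G (Suc t) True hist)
     + beta * sumPV (mf n x) (G (Suc t) False hist) (G (Suc t) True hist) (f ((f ^^ t) s1))"
    unfolding zx QG_def Q_eq by simp
  ultimately show ?thesis using e
    abs_triangle_ineq[of "ell cr cd D h (mf n x) ((f ^^ t) s1) (G (Suc t) False hist) (G (Suc t) True hist)"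
       "beta * sumPV (mf n x) (G (Suc t) False hist) (G (Suc t) True hist) (f ((f ^^ t) s1))"] by linarith
qed

lemma W_le: assumes "adm G" shows "Wv G t \<le> Cv G t + beta * Wv G (Suc t)"
  unfolding CW_QG[OF assms] unfolding Wv_def
proof (rule integral_mono_AE)
  show "integrable (measure_pmf (proc' G t)) (\<lambda>(x, hist). V (mf n x) ((f ^^ t) s1))"
    by (rule integrable_pmf_bounded[where B=BV]) (auto simp: V_mf_bound)
  show "integrable (measure_pmf (proc' G t)) (QG G t)"
    by (rule integrable_pmf_bounded) (rule QG_bound[OF assms])
  show "AE z in measure_pmf (proc' G t). (\<lambda>(x, hist). V (mf n x) ((f ^^ t) s1)) z \<le> QG G t z"
    unfolding AE_measure_pmf_iff
  proof
    fix z assume z: "z \<in> set_pmf (proc' G t)"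
    obtain x hist where zx: "z = (x, hist)" by (cases z)
    have g: "G (Suc t) False hist \<in> {1..k}" "G (Suc t) True hist \<in> {1..k}"
      using assms z unfolding adm_def zx by auto
    show "(\<lambda>(x, hist). V (mf n x) ((f ^^ t) s1)) z \<le> QG G t z"
      unfolding zx QG_def using V_le[OF mf_Mset[OF n_pos] g] by simp
  qed
qed

definition gstar :: "nat \<Rightarrow> bool \<Rightarrow> real list \<Rightarrow> nat" where
  "gstar = (\<lambda>t x hist. if x then gds (last hist) ((f ^^ (t - 1)) s1)
                       else grs (last hist) ((f ^^ (t - 1)) s1))"

lemma adm_gstar: "adm gstar"
  unfolding adm_def gstar_def
proof (intro allI impI)
  fix t x hist assume z: "(x, hist) \<in> set_pmf (proc' (\<lambda>t x hist. if x then gds (last hist) ((f ^^ (t - 1)) s1)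
                       else grs (last hist) ((f ^^ (t - 1)) s1)) t)"
  have l: "last hist = mf n x" using last_hist[OF z] by simp
  show "(if False then gds (last hist) ((f ^^ (Suc t - 1)) s1) else grs (last hist) ((f ^^ (Suc t - 1)) s1)) \<in> {1..k} \<and>
        (if True then gds (last hist) ((f ^^ (Suc t - 1)) s1) else grs (last hist) ((f ^^ (Suc t - 1)) s1)) \<in> {1..k}"
    unfolding l using minimizer[OF mf_Mset[OF n_pos]] by simp
qed

lemma W_eq: "Wv gstar t = Cv gstar t + beta * Wv gstar (Suc t)"
  unfolding CW_QG[OF adm_gstar] unfolding Wv_def
proof (rule integral_cong_AE)
  show "AE z in measure_pmf (proc' gstar t). (\<lambda>(x, hist). V (mf n x) ((f ^^ t) s1)) z = QG gstar t z"
    unfolding AE_measure_pmf_iff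
  proof
    fix z assume z: "z \<in> set_pmf (proc' gstar t)"
    obtain x hist where zx: "z = (x, hist)" by (cases z)
    have l: "last hist = mf n x" using last_hist[OF z] zx by simp
    have e1: "QG gstar t (x, hist) = Q (mf n x) ((f ^^ t) s1) (grs (mf n x) ((f ^^ t) s1)) (gds (mf n x) ((f ^^ t) s1))"
      unfolding QG_def gstar_def by (simp add: l)
    have e2: "V (mf n x) ((f ^^ t) s1) = Q (mf n x) ((f ^^ t) s1) (grs (mf n x) ((f ^^ t) s1)) (gds (mf n x) ((f ^^ t) s1))"
      by (rule V_eq[OF mf_Mset[OF n_pos]])
    show "(\<lambda>(x, hist). V (mf n x) ((f ^^ t) s1)) z = QG gstar t z"
      unfolding zx using e1 e2 by (simp only: case_prod_conv)
  qed
qed auto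

lemma tele_le: "adm G \<Longrightarrow> Wv G 0 \<le> (\<Sum>t<N. beta ^ t * Cv G t) + beta ^ N * Wv G N"
proof (induction N)
  case 0 thus ?case by simp
next
  case (Suc N)
  have "beta ^ N * Wv G N \<le> beta ^ N * (Cv G N + beta * Wv G (Suc N))"
    using W_le[OF Suc.prems, of N] beta by (intro mult_left_mono) auto
  thus ?case using Suc by (simp add: algebra_simps)
qed

lemma tele_eq: "Wv gstar 0 = (\<Sum>t<N. beta ^ t * Cv gstar t) + beta ^ N * Wv gstar N"
proof (induction N)
  case 0 thus ?case by simp
next
  case (Suc N)
  thus ?case using W_eq[of N] by (simp add: algebra_simps)
qed

lemma Cv_bound: "adm G \<Longrightarrow> \<bar>Cv G t\<bar> \<le> BL"
  unfolding Cv_def by (rule expectation_bound) (rule stage_bound)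

lemma Wv_bound: "\<bar>Wv G t\<bar> \<le> BV"
  unfolding Wv_def by (rule expectation_bound) (auto simp: V_mf_bound)

lemma limits:
  assumes "adm G"
  shows "(\<lambda>N. (\<Sum>t<N. beta ^ t * Cv G t) + beta ^ N * Wv G N) \<longlonglongrightarrow> (\<Sum>t. beta ^ t * Cv G t)"
proof -
  have sg: "summable (\<lambda>t. BL * beta ^ t)" using beta by (intro summable_mult summable_geometric) auto
  have "summable (\<lambda>t. beta ^ t * Cv G t)"
  proof (rule summable_comparison_test'[OF sg])
    fix t :: nat
    show "norm (beta ^ t * Cv G t) \<le> BL * beta ^ t"
      using Cv_bound[OF assms, of t] beta by (simp add: abs_mult mult.commute mult_left_mono)
  qed
  hence l1: "(\<lambda>N. \<Sum>t<N. beta ^ t * Cv G t) \<longlonglongrightarrow> (\<Sum>t. beta ^ t * Cv G t)"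
    by (rule summable_LIMSEQ)
  have l2: "(\<lambda>N. beta ^ N * Wv G N) \<longlonglongrightarrow> 0"
  proof (rule Lim_null_comparison)
    show "\<forall>\<^sub>F N in sequentially. norm (beta ^ N * Wv G N) \<le> BV * beta ^ N"
      using Wv_bound beta by (auto simp: abs_mult mult.commute mult_left_mono)
    show "(\<lambda>N. BV * beta ^ N) \<longlonglongrightarrow> 0"
      using beta by (intro tendsto_mult_right_zero LIMSEQ_power_zero) auto
  qed
  show ?thesis using tendsto_add[OF l1 l2] by simp
qed

lemma main: "adm G \<Longrightarrow> Jcost n p alpha q cr cd D f h s1 beta x0 gstar \<le> Jcost n p alpha q cr cd D f h s1 beta x0 G"
proof -
  assume a: "adm G"
  have "Jcost n p alpha q cr cd D f h s1 beta x0 gstar = Wv gstar 0"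
  proof -
    have "(\<lambda>N. Wv gstar 0) \<longlonglongrightarrow> (\<Sum>t. beta ^ t * Cv gstar t)"
      using limits[OF adm_gstar] unfolding tele_eq[symmetric] .
    thus ?thesis unfolding Jcost_eq using LIMSEQ_unique[OF _ tendsto_const] by blast
  qed
  also have "Wv gstar 0 = Wv G 0" unfolding Wv_def by simp
  also have "Wv G 0 \<le> Jcost n p alpha q cr cd D f h s1 beta x0 G"
    unfolding Jcost_eq
    by (rule LIMSEQ_le[OF tendsto_const limits[OF a]]) (use tele_le[OF a] in auto)
  finally show ?thesis .
qed

end


theorem theorem3:
  fixes n k :: nat and p beta :: real
    and alpha :: "nat \<Rightarrow> real" and q cr cd :: "nat \<Rightarrow> real \<Rightarrow> real"
    and D :: "real \<Rightarrow> real \<Rightarrow> real"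
    and f :: "'s \<Rightarrow> 's" and h :: "'s \<Rightarrow> real" and s1 :: 's
    and V :: "real \<Rightarrow> 's \<Rightarrow> real" and grs gds :: "real \<Rightarrow> 's \<Rightarrow> nat"
    and x0 :: "(nat \<Rightarrow> bool) pmf"
    and g :: "nat \<Rightarrow> bool \<Rightarrow> real list \<Rightarrow> nat"
  assumes n_pos: "n > 0" and k_pos: "k > 0"
    and p: "0 < p" "p < 1"
    and beta: "0 < beta" "beta < 1"
    and alpha: "\<And>u. u \<in> {1..k} \<Longrightarrow> 0 \<le> alpha u \<and> alpha u \<le> 1"
    and q: "\<And>u m. u \<in> {1..k} \<Longrightarrow> m \<in> Mset n \<Longrightarrow> 0 < q u m \<and> q u m \<le> 1"
    and cr: "\<And>u m. u \<in> {1..k} \<Longrightarrow> m \<in> Mset n \<Longrightarrow> cr u (1 - m) \<ge> 0"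
    and cd: "\<And>u m. u \<in> {1..k} \<Longrightarrow> m \<in> Mset n \<Longrightarrow> cd u m \<ge> 0"
    and h: "\<And>s. 0 \<le> h s \<and> h s \<le> 1"
    and D: "\<And>m th. m \<in> Mset n \<Longrightarrow> 0 \<le> th \<Longrightarrow> th \<le> 1 \<Longrightarrow> D m th \<ge> 0"
    and V_bounded: "\<exists>B. \<forall>m\<in>Mset n. \<forall>s. \<bar>V m s\<bar> \<le> B"
    and bellman: "\<And>m s. m \<in> Mset n \<Longrightarrow>
       V m s = Min {Qval n p alpha q cr cd D f h beta V m s gr gd | gr gd. gr \<in> {1..k} \<and> gd \<in> {1..k}}"
    and minimizer: "\<And>m s. m \<in> Mset n \<Longrightarrow>
       grs m s \<in> {1..k} \<and> gds m s \<in> {1..k} \<and>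
       (\<forall>gr\<in>{1..k}. \<forall>gd\<in>{1..k}.
          Qval n p alpha q cr cd D f h beta V m s (grs m s) (gds m s)
          \<le> Qval n p alpha q cr cd D f h beta V m s gr gd)"
    and g_adm: "\<And>t x hist. g t x hist \<in> {1..k}"
  shows "Jcost n p alpha q cr cd D f h s1 beta x0
           (\<lambda>t x hist. if x then gds (last hist) ((f ^^ (t - 1)) s1)
                       else grs (last hist) ((f ^^ (t - 1)) s1))
         \<le> Jcost n p alpha q cr cd D f h s1 beta x0 g"
proof -
  obtain B where B: "\<forall>m\<in>Mset n. \<forall>s. \<bar>V m s\<bar> \<le> B" using V_bounded by blast
  interpret C: ctx n k p beta alpha q cr cd D f h s1 V grs gds x0 B
    by unfold_locales (use assms B in auto)
  have "C.adm g" unfolding C.adm_def using g_adm by auto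
  from C.main[OF this] show ?thesis unfolding C.gstar_def .
qed

end
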